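(* Let $f\in C^2([0,\infty))$ satisfy $f(u)>0$ and $f'(u)>0$ for all $u>0$, assume $f$ is log-concave, i.e. $f''(u)f(u)-f'(u)^2<0$ for all $u>0$, and assume moreover that \[ uf'(u)>f(u)\quad\text{for all } u>0 . \] Let $u(r)$ be any positive solution of \[ u''+\frac{1}{r}u'+f(u)=0,\quad 0<r<1,\qquad u'(0)=u(1)=0 . \] Then $u$ is non-singular, i.e. the linearized problem \[ w''+\frac{1}{r}w'+f'(u(r))w=0,\quad 0<r<1,\qquad w'(0)=w(1)=0 \] has only the trivial solution $w\equiv 0$. *)

theory Defs
  imports Complex_Main
begin

end

theory Submission
  imports Defs "HOL-Analysis.Analysis"
begin

locale ctx =
  fixes f f' f'' u u' u'' :: "real \<Rightarrow> real"
  assumes f_d1: "\<And>x. x \<ge> 0 \<Longrightarrow> (f has_real_derivative f' x) (at x within {0..})"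
    and f_d2: "\<And>x. x \<ge> 0 \<Longrightarrow> (f' has_real_derivative f'' x) (at x within {0..})"
    and f_pos: "\<And>x. x > 0 \<Longrightarrow> f x > 0"
    and f'_pos: "\<And>x. x > 0 \<Longrightarrow> f' x > 0"
    and f_logconc: "\<And>x. x > 0 \<Longrightarrow> f'' x * f x - (f' x)\<^sup>2 < 0"
    and f_super: "\<And>x. x > 0 \<Longrightarrow> x * f' x > f x"
    and u_d1: "\<And>r. r \<in> {0..1} \<Longrightarrow> (u has_real_derivative u' r) (at r within {0..1})"
    and u_d2: "\<And>r. r \<in> {0..1} \<Longrightarrow> (u' has_real_derivative u'' r) (at r within {0..1})"
    and u_C2: "continuous_on {0..1} u''"
    and u_eq: "\<And>r. 0 < r \<Longrightarrow> r < 1 \<Longrightarrow> u'' r + u' r / r + f (u r) = 0"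
    and u_bc0: "u' 0 = 0" and u_bc1: "u 1 = 0"
    and u_pos: "\<And>r. 0 < r \<Longrightarrow> r < 1 \<Longrightarrow> u r > 0"
begin

lemma fD: assumes "x > 0" shows "(f has_real_derivative f' x) (at x)"
proof -
  have "(f has_real_derivative f' x) (at x within {0..2*x})"
    by (rule DERIV_subset[OF f_d1]) (use assms in auto)
  thus ?thesis using at_within_Icc_at[of 0 x "2*x"] assms by simp
qed

lemma f'D: assumes "x > 0" shows "(f' has_real_derivative f'' x) (at x)"
proof -
  have "(f' has_real_derivative f'' x) (at x within {0..2*x})"
    by (rule DERIV_subset[OF f_d2]) (use assms in auto)
  thus ?thesis using at_within_Icc_at[of 0 x "2*x"] assms by simp
qed

lemma uD: "0 < r \<Longrightarrow> r < 1 \<Longrightarrow> (u has_real_derivative u' r) (at r)"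
  using u_d1[of r] at_within_Icc_at[of 0 r 1] by simp

lemma u'D: "0 < r \<Longrightarrow> r < 1 \<Longrightarrow> (u' has_real_derivative u'' r) (at r)"
  using u_d2[of r] at_within_Icc_at[of 0 r 1] by simp

lemma u_cont: "continuous_on {0..1} u"
  by (rule DERIV_continuous_on[OF u_d1])

lemma u'_cont: "continuous_on {0..1} u'"
  by (rule DERIV_continuous_on[OF u_d2])

lemma fuD: "0 < r \<Longrightarrow> r < 1 \<Longrightarrow> ((\<lambda>r. f (u r)) has_real_derivative f' (u r) * u' r) (at r)"
  by (rule DERIV_chain2[OF fD uD]) (auto intro: u_pos)

lemma f'uD: "0 < r \<Longrightarrow> r < 1 \<Longrightarrow> ((\<lambda>r. f' (u r)) has_real_derivative f'' (u r) * u' r) (at r)"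
  by (rule DERIV_chain2[OF f'D uD]) (auto intro: u_pos)

lemma PD: assumes "0 < r" "r < 1"
  shows "((\<lambda>r. r * u' r) has_real_derivative - (r * f (u r))) (at r)"
proof -
  have "((\<lambda>r. r * u' r) has_real_derivative 1 * u' r + u'' r * r) (at r)"
    by (rule DERIV_mult[OF DERIV_ident u'D[OF assms]])
  moreover have "1 * u' r + u'' r * r = - (r * f (u r))"
    using u_eq[OF assms] assms by (simp add: field_simps)
  ultimately show ?thesis by simp
qed

lemma P_cont: "continuous_on {0..1} (\<lambda>r. r * u' r)"
  by (intro continuous_intros u'_cont)

lemma P_dec: assumes "0 \<le> x" "x < y" "y \<le> 1" shows "y * u' y < x * u' x"
proof -
  have "(\<lambda>r. r * u' r) y < (\<lambda>r. r * u' r) x"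
  proof (rule DERIV_neg_imp_decreasing_open[OF assms(2)])
    fix t assume "x < t" "t < y"
    with assms have t: "0 < t" "t < 1" by auto
    show "\<exists>d. ((\<lambda>r. r * u' r) has_real_derivative d) (at t) \<and> d < 0"
      using PD[OF t] f_pos[OF u_pos[OF t]] t by (intro exI[of _ "- (t * f (u t))"]) auto
  next
    show "continuous_on {x..y} (\<lambda>r. r * u' r)"
      by (rule continuous_on_subset[OF P_cont]) (use assms in auto)
  qed
  thus ?thesis by simp
qed

lemma u'_neg: assumes "0 < r" "r \<le> 1" shows "u' r < 0"
  using P_dec[of 0 r] assms by (simp add: mult_less_0_iff)

definition m where "m r = f' (u r) / f (u r)"

lemma mD: assumes "0 < r" "r < 1"
  shows "\<exists>d. (m has_real_derivative d) (at r) \<and> d > 0"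
proof -
  have fp: "f (u r) > 0" using f_pos[OF u_pos[OF assms]] .
  have "(m has_real_derivative (f'' (u r) * u' r * f (u r) - f' (u r) * (f' (u r) * u' r)) / (f (u r) * f (u r))) (at r)"
    unfolding m_def[abs_def]
    by (rule DERIV_divide[OF f'uD[OF assms] fuD[OF assms]]) (use fp in simp)
  moreover have "(f'' (u r) * u' r * f (u r) - f' (u r) * (f' (u r) * u' r)) / (f (u r) * f (u r)) > 0"
  proof -
    have "f'' (u r) * u' r * f (u r) - f' (u r) * (f' (u r) * u' r) = u' r * (f'' (u r) * f (u r) - (f' (u r))\<^sup>2)"
      by (simp add: algebra_simps power2_eq_square)
    also have "\<dots> > 0"
      using u'_neg[of r] assms f_logconc[OF u_pos[OF assms]] by (simp add: mult_neg_neg)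
    finally show ?thesis using fp by simp
  qed
  ultimately show ?thesis by blast
qed

lemma m_inc: assumes "0 < x" "x < y" "y < 1" shows "m x < m y"
  by (rule DERIV_pos_imp_increasing[OF assms(2)]) (use assms mD in auto)


definition linsol :: "(real\<Rightarrow>real) \<Rightarrow> (real\<Rightarrow>real) \<Rightarrow> (real\<Rightarrow>real) \<Rightarrow> bool" where
 "linsol w w' w'' \<longleftrightarrow> (\<forall>r\<in>{0..1}. (w has_real_derivative w' r) (at r within {0..1}))
    \<and> (\<forall>r\<in>{0..1}. (w' has_real_derivative w'' r) (at r within {0..1}))
    \<and> (\<forall>r. 0 < r \<and> r < 1 \<longrightarrow> w'' r + w' r / r + f' (u r) * w r = 0)"

lemma linsol_neg: "linsol w w' w'' \<Longrightarrow> linsol (\<lambda>r. - w r) (\<lambda>r. - w' r) (\<lambda>r. - w'' r)"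
  unfolding linsol_def
  apply (intro conjI ballI allI impI)
    apply (auto intro!: DERIV_minus)
  done

definition Du where "Du w w' r = r * (u r * w' r - u' r * w r)"
definition Dc where "Dc c w w' r = (r * u' r + c) * (r * w' r) - r * (u' r + r * u'' r) * w r"

context
  fixes w w' w'' assumes lin: "linsol w w' w''"
begin

lemma wD: assumes "0 < r" "r < 1" shows "(w has_real_derivative w' r) (at r)"
proof -
  have "(w has_real_derivative w' r) (at r within {0..1})" using lin assms unfolding linsol_def by auto
  thus ?thesis using at_within_Icc_at[of 0 r 1] assms by simp
qed

lemma w'D: assumes "0 < r" "r < 1" shows "(w' has_real_derivative w'' r) (at r)"
proof -
  have "(w' has_real_derivative w'' r) (at r within {0..1})" using lin assms unfolding linsol_def by auto
  thus ?thesis using at_within_Icc_at[of 0 r 1] assms by simp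
qed

lemma w_d1: "r \<in> {0..1} \<Longrightarrow> (w has_real_derivative w' r) (at r within {0..1})"
  using lin unfolding linsol_def by auto

lemma w_cont: "continuous_on {0..1} w"
  by (rule DERIV_continuous_on[OF w_d1])

lemma w'_cont: "continuous_on {0..1} w'"
  using lin unfolding linsol_def by (intro DERIV_continuous_on) auto

lemma w_eq: "0 < r \<Longrightarrow> r < 1 \<Longrightarrow> w'' r = - w' r / r - f' (u r) * w r"
  using lin unfolding linsol_def by (auto simp: field_simps)

lemma u_eq': "0 < r \<Longrightarrow> r < 1 \<Longrightarrow> u'' r = - u' r / r - f (u r)"
  using u_eq[of r] by (auto simp: field_simps)

lemma DuD: assumes "0 < r" "r < 1"
  shows "(Du w w' has_real_derivative r * w r * (f (u r) - u r * f' (u r))) (at r)"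
  unfolding Du_def
  apply (rule derivative_eq_intros uD[OF assms] u'D[OF assms] wD[OF assms] w'D[OF assms] refl)+
  using assms by (simp add: w_eq u_eq' field_simps)

lemma Du_cont: "continuous_on {0..1} (Du w w')"
  unfolding Du_def by (intro continuous_intros u_cont u'_cont w_cont w'_cont)

lemma Dc_cont: "continuous_on {0..1} (Dc c w w')"
  unfolding Dc_def by (intro continuous_intros u_cont u'_cont w_cont w'_cont u_C2)

lemma DcD: assumes "0 < r" "r < 1"
  shows "(Dc c w w' has_real_derivative r * w r * (2 * f (u r) - c * f' (u r))) (at r)"
proof -
  have "((\<lambda>r. (r * u' r + c) * (r * w' r) + r^2 * f (u r) * w r) has_real_derivative r * w r * (2 * f (u r) - c * f' (u r))) (at r)"
    apply (rule derivative_eq_intros fuD[OF assms] uD[OF assms] u'D[OF assms] wD[OF assms] w'D[OF assms] refl)+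
    using assms by (simp add: w_eq u_eq' field_simps power2_eq_square)
  then show ?thesis
  proof (rule has_field_derivative_transform_within_open[where S="{0<..<1}"])
    fix x :: real assume "x \<in> {0<..<1}"
    then have h: "u' x + x * u'' x = - (x * f (u x))" using u_eq'[of x] by (auto simp: field_simps)
    have "Dc c w w' x = (x * u' x + c) * (x * w' x) - x * (- (x * f (u x))) * w x"
      unfolding Dc_def h by simp
    then show "(x * u' x + c) * (x * w' x) + x^2 * f (u x) * w x = Dc c w w' x"
      by (simp add: power2_eq_square)
  qed (use assms in auto)
qed

lemma wp_left: assumes "0 \<le> a" "a < b" "b \<le> 1" "w a = 0" "\<forall>t. a < t \<and> t < b \<longrightarrow> w t < 0"
  shows "w' a \<le> 0"
proof (rule ccontr)
  assume "\<not> w' a \<le> 0"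
  then have "w' a > 0" by simp
  from has_real_derivative_pos_inc_right[OF w_d1[of a] this] assms obtain d where
    d: "d > 0" "\<forall>h>0. a + h \<in> {0..1} \<longrightarrow> h < d \<longrightarrow> w a < w (a + h)" by auto
  define h where "h = min d (b - a) / 2"
  have "min d (b - a) \<le> b - a" "min d (b - a) \<le> d" "min d (b - a) > 0" using d assms by auto
  then have h: "h > 0" "h < d" "a + h < b" unfolding h_def using d assms by (auto simp: min_def)
  then have "w a < w (a + h)" using d assms by auto
  moreover have "w (a + h) < 0" using assms h by auto
  ultimately show False using assms by simp
qed

lemma wp_right: assumes "0 \<le> a" "a < b" "b \<le> 1" "w b = 0" "\<forall>t. a < t \<and> t < b \<longrightarrow> w t < 0"
  shows "w' b \<ge> 0"
proof (rule ccontr)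
  assume "\<not> w' b \<ge> 0"
  then have "w' b < 0" by simp
  from has_real_derivative_neg_dec_left[OF w_d1[of b] this] assms obtain d where
    d: "d > 0" "\<forall>h>0. b - h \<in> {0..1} \<longrightarrow> h < d \<longrightarrow> w b < w (b - h)" by auto
  define h where "h = min d (b - a) / 2"
  have "min d (b - a) \<le> b - a" "min d (b - a) \<le> d" "min d (b - a) > 0" using d assms by auto
  then have h: "h > 0" "h < d" "a < b - h" unfolding h_def using d assms by (auto simp: min_def)
  then have "w b < w (b - h)" using d assms by auto
  moreover have "w (b - h) < 0" using assms h by auto
  ultimately show False using assms by simp
qed

lemma LA: assumes "0 \<le> a" "a < b" "b \<le> 1" "\<forall>t. a < t \<and> t < b \<longrightarrow> w t < 0"
  "a = 0 \<or> w a = 0" "w b = 0" "a = 0 \<or> w' a = 0" "b = 1 \<or> w' b = 0"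
  shows False
proof -
  have "Du w w' a < Du w w' b"
  proof (rule DERIV_pos_imp_increasing_open[OF assms(2)])
    fix r assume r: "a < r" "r < b"
    then have r01: "0 < r" "r < 1" using assms by auto
    have "f (u r) - u r * f' (u r) < 0" using f_super[OF u_pos[OF r01]] by (simp add: mult.commute)
    moreover have "w r < 0" using assms r by auto
    ultimately have "w r * (f (u r) - u r * f' (u r)) > 0" by (simp add: mult_neg_neg)
    then have "r * w r * (f (u r) - u r * f' (u r)) > 0" using r01 by (simp add: mult.assoc)
    then show "\<exists>y. (Du w w' has_real_derivative y) (at r) \<and> y > 0" using DuD[OF r01] by blast
  next
    show "continuous_on {a..b} (Du w w')" by (rule continuous_on_subset[OF Du_cont]) (use assms in auto)
  qed
  moreover have "Du w w' a = 0" using assms(5,7) by (auto simp: Du_def)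
  moreover have "Du w w' b = 0" using assms(6,8) u_bc1 by (auto simp: Du_def)
  ultimately show False by simp
qed

lemma LB: assumes "0 \<le> a" "a < b" "b < 1" "\<forall>t. a < t \<and> t < b \<longrightarrow> w t < 0"
  "a = 0 \<or> w a = 0" "w b = 0"
  shows "- (b * u' b) * m b > 2"
proof (rule ccontr)
  define c where "c = - (b * u' b)"
  assume "\<not> - (b * u' b) * m b > 2"
  then have cm: "c * m b \<le> 2" by (simp add: c_def)
  have b0: "b > 0" using assms by simp
  have cpos: "c > 0" using u'_neg[of b] assms b0 by (simp add: c_def mult_pos_neg)
  have "Dc c w w' b < Dc c w w' a"
  proof (rule DERIV_neg_imp_decreasing_open[OF assms(2)])
    fix r assume r: "a < r" "r < b"
    then have r01: "0 < r" "r < 1" using assms by auto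
    have fp: "f (u r) > 0" using f_pos[OF u_pos[OF r01]] .
    have "m r < m b" using m_inc[of r b] r01 r assms by auto
    then have "c * m r < 2" using cm cpos by (smt (verit) mult_strict_left_mono)
    then have "c * f' (u r) < 2 * f (u r)" using fp unfolding m_def by (simp add: field_simps)
    moreover have "w r < 0" using assms r by auto
    ultimately have "w r * (2 * f (u r) - c * f' (u r)) < 0" by (simp add: mult_neg_pos)
    then have "r * w r * (2 * f (u r) - c * f' (u r)) < 0" using r01 by (simp add: mult.assoc mult_pos_neg)
    then show "\<exists>y. (Dc c w w' has_real_derivative y) (at r) \<and> y < 0" using DcD[OF r01] by blast
  next
    show "continuous_on {a..b} (Dc c w w')" by (rule continuous_on_subset[OF Dc_cont]) (use assms in auto)
  qed
  moreover have "Dc c w w' b = 0" using assms(6) by (simp add: Dc_def c_def)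
  moreover have "Dc c w w' a \<le> 0"
  proof (cases "a = 0")
    case True then show ?thesis by (simp add: Dc_def)
  next
    case False
    then have wa: "w a = 0" "a > 0" using assms by auto
    have "a * u' a + c > 0" using P_dec[of a b] assms by (simp add: c_def)
    moreover have "w' a \<le> 0" using wp_left[OF assms(1,2) _ wa(1) assms(4)] assms by simp
    ultimately show ?thesis using wa by (simp add: Dc_def mult_nonneg_nonpos mult_pos_neg)
  qed
  ultimately show False by simp
qed

lemma LC: assumes "0 < a" "a < b" "b \<le> 1" "\<forall>t. a < t \<and> t < b \<longrightarrow> w t < 0"
  "w a = 0" "w b = 0"
  shows "- (a * u' a) * m a < 2"
proof (rule ccontr)
  define c where "c = - (a * u' a)"
  assume "\<not> - (a * u' a) * m a < 2"
  then have cm: "c * m a \<ge> 2" by (simp add: c_def)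
  have cpos: "c > 0" using u'_neg[of a] assms by (simp add: c_def mult_pos_neg)
  have "Dc c w w' a < Dc c w w' b"
  proof (rule DERIV_pos_imp_increasing_open[OF assms(2)])
    fix r assume r: "a < r" "r < b"
    then have r01: "0 < r" "r < 1" using assms by auto
    have fp: "f (u r) > 0" using f_pos[OF u_pos[OF r01]] .
    have "m a < m r" using m_inc[of a r] r01 r assms by auto
    then have "c * m r > 2" using cm cpos by (smt (verit) mult_strict_left_mono)
    then have "c * f' (u r) > 2 * f (u r)" using fp unfolding m_def by (simp add: field_simps)
    moreover have "w r < 0" using assms r by auto
    ultimately have "w r * (2 * f (u r) - c * f' (u r)) > 0" by (simp add: mult_neg_neg)
    then have "r * w r * (2 * f (u r) - c * f' (u r)) > 0" using r01 by (simp add: mult.assoc)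
    then show "\<exists>y. (Dc c w w' has_real_derivative y) (at r) \<and> y > 0" using DcD[OF r01] by blast
  next
    show "continuous_on {a..b} (Dc c w w')" by (rule continuous_on_subset[OF Dc_cont]) (use assms in auto)
  qed
  moreover have "Dc c w w' a = 0" using assms(5) by (simp add: Dc_def c_def)
  moreover have "Dc c w w' b \<le> 0"
  proof -
    have "b * u' b + c < 0" using P_dec[of a b] assms by (simp add: c_def)
    moreover have "w' b \<ge> 0" using wp_right[of a b] assms by simp
    ultimately show ?thesis using assms by (simp add: Dc_def mult_nonpos_nonneg mult_neg_pos)
  qed
  ultimately show False by simp
qed

lemma nz_right: assumes "0 \<le> b" "b < 1" "w b = 0" "w' b \<noteq> 0"
  shows "\<exists>d>0. \<forall>h>0. h < d \<longrightarrow> b + h \<le> 1 \<longrightarrow> w (b + h) \<noteq> 0"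
proof (cases "w' b > 0")
  case True
  from has_real_derivative_pos_inc_right[OF w_d1[of b] True] assms obtain d where
    "d > 0" "\<forall>h>0. b + h \<in> {0..1} \<longrightarrow> h < d \<longrightarrow> w b < w (b + h)" by auto
  then show ?thesis using assms by (intro exI[of _ d]) auto
next
  case False
  then have "w' b < 0" using assms by simp
  from has_real_derivative_neg_dec_right[OF w_d1[of b] this] assms obtain d where
    "d > 0" "\<forall>h>0. b + h \<in> {0..1} \<longrightarrow> h < d \<longrightarrow> w b > w (b + h)" by auto
  then show ?thesis using assms by (intro exI[of _ d]) auto
qed

lemma nz_left: assumes "0 < a" "a \<le> 1" "w a = 0" "w' a \<noteq> 0"
  shows "\<exists>d>0. \<forall>h>0. h < d \<longrightarrow> 0 \<le> a - h \<longrightarrow> w (a - h) \<noteq> 0"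
proof (cases "w' a > 0")
  case True
  from has_real_derivative_pos_inc_left[OF w_d1[of a] True] assms obtain d where
    "d > 0" "\<forall>h>0. a - h \<in> {0..1} \<longrightarrow> h < d \<longrightarrow> w (a - h) < w a" by auto
  then show ?thesis using assms by (intro exI[of _ d]) auto
next
  case False
  then have "w' a < 0" using assms by simp
  from has_real_derivative_neg_dec_left[OF w_d1[of a] this] assms obtain d where
    "d > 0" "\<forall>h>0. a - h \<in> {0..1} \<longrightarrow> h < d \<longrightarrow> w a < w (a - h)" by auto
  then show ?thesis using assms by (intro exI[of _ d]) auto
qed

end

definition ss :: "(real \<Rightarrow> real) \<Rightarrow> real \<Rightarrow> real \<Rightarrow> bool" where
  "ss w a b \<longleftrightarrow> (\<forall>t. a < t \<and> t < b \<longrightarrow> w t < 0) \<or> (\<forall>t. a < t \<and> t < b \<longrightarrow> w t > 0)"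

lemma LA': assumes "linsol w w' w''" "0 \<le> a" "a < b" "b \<le> 1" "ss w a b"
  "a = 0 \<or> w a = 0" "w b = 0" "a = 0 \<or> w' a = 0" "b = 1 \<or> w' b = 0"
  shows False
  using assms(5) unfolding ss_def
proof
  assume "\<forall>t. a < t \<and> t < b \<longrightarrow> w t < 0"
  then show False using LA[OF assms(1-4)] assms(6-9) by blast
next
  assume "\<forall>t. a < t \<and> t < b \<longrightarrow> w t > 0"
  then show False using LA[OF linsol_neg[OF assms(1)] assms(2-4)] assms(6-9) by auto
qed

lemma LB': assumes "linsol w w' w''" "0 \<le> a" "a < b" "b < 1" "ss w a b"
  "a = 0 \<or> w a = 0" "w b = 0"
  shows "- (b * u' b) * m b > 2"
  using assms(5) unfolding ss_def
proof
  assume "\<forall>t. a < t \<and> t < b \<longrightarrow> w t < 0"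
  then show ?thesis using LB[OF assms(1-4)] assms(6-7) by blast
next
  assume "\<forall>t. a < t \<and> t < b \<longrightarrow> w t > 0"
  then show ?thesis using LB[OF linsol_neg[OF assms(1)] assms(2-4)] assms(6-7) by auto
qed

lemma LC': assumes "linsol w w' w''" "0 < a" "a < b" "b \<le> 1" "ss w a b"
  "w a = 0" "w b = 0"
  shows "- (a * u' a) * m a < 2"
  using assms(5) unfolding ss_def
proof
  assume "\<forall>t. a < t \<and> t < b \<longrightarrow> w t < 0"
  then show ?thesis using LC[OF assms(1-4)] assms(6-7) by blast
next
  assume "\<forall>t. a < t \<and> t < b \<longrightarrow> w t > 0"
  then show ?thesis using LC[OF linsol_neg[OF assms(1)] assms(2-4)] assms(6-7) by auto
qed

end

lemma nodal:
  fixes w :: "real \<Rightarrow> real"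
  assumes cw: "continuous_on {0..1} w" and w1: "w 1 = 0" and r: "0 < r" "r < 1" and wr: "w r \<noteq> 0"
  shows "\<exists>a b. 0 \<le> a \<and> a < r \<and> r < b \<and> b \<le> 1 \<and> (a = 0 \<or> w a = 0) \<and> w b = 0
           \<and> (\<forall>t. a < t \<and> t < b \<longrightarrow> w t \<noteq> 0)"
proof -
  define B where "B = {r..1} \<inter> w -` {0}"
  have cB: "closed B" unfolding B_def
    by (rule continuous_closed_preimage) (rule continuous_on_subset[OF cw], use r in auto)
  have "1 \<in> B" using w1 r by (auto simp: B_def)
  hence Bne: "B \<noteq> {}" by auto
  have bddB: "bdd_below B" unfolding B_def by (rule bdd_belowI[of _ r]) auto
  define b where "b = Inf B"
  have bB: "b \<in> B" unfolding b_def by (rule closed_contains_Inf[OF Bne bddB cB])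
  have bl: "\<And>t. t \<in> B \<Longrightarrow> b \<le> t" unfolding b_def by (rule cInf_lower[OF _ bddB])
  have b1: "b \<le> 1" using bl[OF \<open>1 \<in> B\<close>] .
  have rb: "r < b" using bB wr by (auto simp: B_def) (metis antisym_conv2)
  have wb: "w b = 0" using bB by (auto simp: B_def)
  have nzb: "\<And>t. r \<le> t \<Longrightarrow> t < b \<Longrightarrow> w t \<noteq> 0"
  proof
    fix t assume "r \<le> t" "t < b" "w t = 0"
    then have "t \<in> B" using b1 by (auto simp: B_def)
    then show False using bl \<open>t < b\<close> by force
  qed
  obtain a where a: "0 \<le> a" "a < r" "a = 0 \<or> w a = 0" "\<And>t. a < t \<Longrightarrow> t \<le> r \<Longrightarrow> w t \<noteq> 0"
  proof (cases "{0..r} \<inter> w -` {0} = {}")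
    case True
    show ?thesis
    proof (rule that[of 0])
      fix t :: real assume "0 < t" "t \<le> r"
      then have "t \<in> {0..r}" by auto
      then show "w t \<noteq> 0" using True by (auto simp del: atLeastAtMost_iff)
    qed (use r in auto)
  next
    case False
    define A where "A = {0..r} \<inter> w -` {0}"
    have cA: "closed A" unfolding A_def
      by (rule continuous_closed_preimage) (rule continuous_on_subset[OF cw], use r in auto)
    have Ane: "A \<noteq> {}" using False by (simp add: A_def)
    have bddA: "bdd_above A" unfolding A_def by (rule bdd_aboveI[of _ r]) auto
    have aA: "Sup A \<in> A" by (rule closed_contains_Sup[OF Ane bddA cA])
    have al: "\<And>t. t \<in> A \<Longrightarrow> t \<le> Sup A" by (rule cSup_upper[OF _ bddA])
    show ?thesis
    proof (rule that[of "Sup A"])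
      show "0 \<le> Sup A" using aA by (auto simp: A_def)
      show "Sup A < r" using aA wr by (auto simp: A_def) (metis antisym_conv2)
      show "Sup A = 0 \<or> w (Sup A) = 0" using aA by (auto simp: A_def)
      fix t assume "Sup A < t" "t \<le> r"
      moreover have "0 \<le> Sup A" using aA by (auto simp: A_def)
      ultimately show "w t \<noteq> 0" using al[of t] by (auto simp: A_def)
    qed
  qed
  show ?thesis
  proof (intro exI conjI allI impI)
    fix t assume "a < t \<and> t < b"
    then show "w t \<noteq> 0" using a(4)[of t] nzb[of t] by (cases "t \<le> r") auto
  qed (use a rb b1 wb in auto)
qed

lemma sign_const:
  fixes w :: "real \<Rightarrow> real"
  assumes cw: "continuous_on {0..1} w" and "0 \<le> a" "b \<le> 1" "\<forall>t. a < t \<and> t < b \<longrightarrow> w t \<noteq> 0"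
  shows "(\<forall>t. a < t \<and> t < b \<longrightarrow> w t < 0) \<or> (\<forall>t. a < t \<and> t < b \<longrightarrow> w t > 0)"
proof (rule ccontr)
  assume "\<not> ?thesis"
  then obtain t1 t2 where t: "a < t1" "t1 < b" "a < t2" "t2 < b" "\<not> w t1 < 0" "\<not> w t2 > 0" by auto
  then have w12: "w t1 > 0" "w t2 < 0" using assms(4) by (auto simp: neq_iff)
  have sub: "\<And>x y. a < x \<Longrightarrow> y < b \<Longrightarrow> continuous_on {x..y} w"
    by (rule continuous_on_subset[OF cw]) (use assms in auto)
  show False
  proof (cases "t1 \<le> t2")
    case True
    from IVT2'[of w t2 0 t1, OF _ _ True sub[OF t(1) t(4)]] w12 obtain x where
      "t1 \<le> x" "x \<le> t2" "w x = 0" by auto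
    then show False using assms(4) t by force
  next
    case False
    then have "t2 \<le> t1" by simp
    from IVT'[of w t2 0 t1, OF _ _ this sub[OF t(3) t(2)]] w12 obtain x where
      "t2 \<le> x" "x \<le> t1" "w x = 0" by auto
    then show False using assms(4) t by force
  qed
qed

theorem theorem3p2:
  fixes f f' f'' :: "real \<Rightarrow> real"
    and u u' u'' :: "real \<Rightarrow> real"
  assumes f_d1: "\<And>x. x \<ge> 0 \<Longrightarrow> (f has_real_derivative f' x) (at x within {0..})"
    and f_d2: "\<And>x. x \<ge> 0 \<Longrightarrow> (f' has_real_derivative f'' x) (at x within {0..})"
    and f_C2: "continuous_on {0..} f''"
    and f_pos: "\<And>x. x > 0 \<Longrightarrow> f x > 0"
    and f'_pos: "\<And>x. x > 0 \<Longrightarrow> f' x > 0"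
    and f_logconc: "\<And>x. x > 0 \<Longrightarrow> f'' x * f x - (f' x)\<^sup>2 < 0"
    and f_super: "\<And>x. x > 0 \<Longrightarrow> x * f' x > f x"
    and u_d1: "\<And>r. r \<in> {0..1} \<Longrightarrow> (u has_real_derivative u' r) (at r within {0..1})"
    and u_d2: "\<And>r. r \<in> {0..1} \<Longrightarrow> (u' has_real_derivative u'' r) (at r within {0..1})"
    and u_C2: "continuous_on {0..1} u''"
    and u_eq: "\<And>r. 0 < r \<Longrightarrow> r < 1 \<Longrightarrow> u'' r + u' r / r + f (u r) = 0"
    and u_bc: "u' 0 = 0" "u 1 = 0"
    and u_pos: "\<And>r. 0 < r \<Longrightarrow> r < 1 \<Longrightarrow> u r > 0"
  shows "\<forall>w w' w''.
           (\<forall>r\<in>{0..1}. (w has_real_derivative w' r) (at r within {0..1}))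
         \<and> (\<forall>r\<in>{0..1}. (w' has_real_derivative w'' r) (at r within {0..1}))
         \<and> continuous_on {0..1} w''
         \<and> (\<forall>r. 0 < r \<and> r < 1 \<longrightarrow> w'' r + w' r / r + f' (u r) * w r = 0)
         \<and> w' 0 = 0 \<and> w 1 = 0
         \<longrightarrow> (\<forall>r\<in>{0..1}. w r = 0)"
proof -
  interpret ctx f f' f'' u u' u''
    by (rule ctx.intro) (fact f_d1 f_d2 f_pos f'_pos f_logconc f_super u_d1 u_d2 u_C2 u_eq u_bc u_pos)+
  show ?thesis
  proof (intro allI impI)
    fix w w' w'' :: "real \<Rightarrow> real"
    assume H: "(\<forall>r\<in>{0..1}. (w has_real_derivative w' r) (at r within {0..1}))
         \<and> (\<forall>r\<in>{0..1}. (w' has_real_derivative w'' r) (at r within {0..1}))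
         \<and> continuous_on {0..1} w''
         \<and> (\<forall>r. 0 < r \<and> r < 1 \<longrightarrow> w'' r + w' r / r + f' (u r) * w r = 0)
         \<and> w' 0 = 0 \<and> w 1 = 0"
    have lin: "linsol w w' w''" using H unfolding linsol_def by auto
    have cw: "continuous_on {0..1} w" by (rule w_cont[OF lin])
    have w1: "w 1 = 0" using H by auto
    show "\<forall>r\<in>{0..1}. w r = 0"
    proof (rule ccontr)
      assume "\<not> (\<forall>r\<in>{0..1}. w r = 0)"
      then obtain r0 where r0: "r0 \<in> {0..1}" "w r0 \<noteq> 0" by auto
      have "\<exists>r1. 0 < r1 \<and> r1 < 1 \<and> w r1 \<noteq> 0"
      proof (rule ccontr)
        assume nz: "\<not> (\<exists>r1. 0 < r1 \<and> r1 < 1 \<and> w r1 \<noteq> 0)"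
        have lim: "(w \<longlongrightarrow> w 0) (at_right 0)" by (rule continuous_on_Icc_at_rightD[OF cw]) simp
        have "eventually (\<lambda>x. w x = 0) (at_right (0::real))"
          by (rule eventually_at_rightI[of 0 1]) (use nz in auto)
        then have "(w \<longlongrightarrow> 0) (at_right 0)" by (rule tendsto_eventually)
        then have "w 0 = 0" using tendsto_unique[OF _ lim] by auto
        then show False using r0 nz w1 by (cases "r0 = 0"; cases "r0 = 1") auto
      qed
      then obtain r1 where r1: "0 < r1" "r1 < 1" "w r1 \<noteq> 0" by auto
      from nodal[OF cw w1 r1] obtain a b where ab: "0 \<le> a" "a < r1" "r1 < b" "b \<le> 1"
        "a = 0 \<or> w a = 0" "w b = 0" "\<forall>t. a < t \<and> t < b \<longrightarrow> w t \<noteq> 0" by blast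
      have ssab: "ss w a b" using sign_const[OF cw ab(1,4,7)] unfolding ss_def .
      have "\<not> ((a = 0 \<or> w' a = 0) \<and> (b = 1 \<or> w' b = 0))"
        using LA'[OF lin ab(1) _ ab(4) ssab ab(5,6)] ab by auto
      then consider (R) "b < 1" "w' b \<noteq> 0" | (L) "0 < a" "w' a \<noteq> 0" using ab by force
      then show False
      proof cases
        case R
        have g1: "- (b * u' b) * m b > 2"
          by (rule LB'[OF lin ab(1) _ R(1) ssab ab(5,6)]) (use ab in auto)
        from nz_right[OF lin, of b] R ab obtain d where
          d: "d > 0" "\<forall>h>0. h < d \<longrightarrow> b + h \<le> 1 \<longrightarrow> w (b + h) \<noteq> 0" by auto
        define r2 where "r2 = b + min d (1 - b) / 2"
        have m1: "min d (1 - b) \<le> 1 - b" "min d (1 - b) \<le> d" "min d (1 - b) > 0" using d R by auto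
        have r2a: "b < r2" unfolding r2_def using m1 by (smt (verit) field_sum_of_halves)
        have r2b: "r2 < 1" unfolding r2_def using m1 by (smt (verit) field_sum_of_halves)
        have r2c: "r2 - b < d" unfolding r2_def using m1 by (smt (verit) field_sum_of_halves)
        note r2 = r2a r2b r2c
        have "w r2 \<noteq> 0" using d(2)[rule_format, of "r2 - b"] r2 by simp
        from nodal[OF cw w1 _ r2(2) this] r2 ab obtain a2 b2 where ab2: "0 \<le> a2" "a2 < r2" "r2 < b2" "b2 \<le> 1"
          "a2 = 0 \<or> w a2 = 0" "w b2 = 0" "\<forall>t. a2 < t \<and> t < b2 \<longrightarrow> w t \<noteq> 0" by auto
        have "a2 = b"
        proof (rule ccontr)
          assume "a2 \<noteq> b"
          then consider "a2 < b" | "b < a2" by linarith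
          then show False
          proof cases
            case 1 then show False using ab2(7)[rule_format, of b] ab(6) r2 ab2 by auto
          next
            case 2
            then have "w a2 = 0" using ab2(5) ab by auto
            moreover have "w (b + (a2 - b)) \<noteq> 0"
              using d(2)[rule_format, of "a2 - b"] 2 r2 ab2 by auto
            ultimately show False by simp
          qed
        qed
        have ss2: "ss w b b2" using sign_const[OF cw _ ab2(4)] ab2(7) ab \<open>a2 = b\<close> unfolding ss_def by auto
        have "- (b * u' b) * m b < 2"
          by (rule LC'[OF lin _ _ ab2(4) ss2 ab(6) ab2(6)]) (use ab r1 r2 ab2 in auto)
        then show False using g1 by simp
      next
        case L
        have g1: "- (a * u' a) * m a < 2"
          by (rule LC'[OF lin L(1) _ ab(4) ssab _ ab(6)]) (use ab L in auto)
        from nz_left[OF lin, of a] L ab obtain d where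
          d: "d > 0" "\<forall>h>0. h < d \<longrightarrow> 0 \<le> a - h \<longrightarrow> w (a - h) \<noteq> 0" by auto
        define r2 where "r2 = a - min d a / 2"
        have m1: "min d a \<le> a" "min d a \<le> d" "min d a > 0" using d L by auto
        have r2a: "r2 < a" unfolding r2_def using m1 by (smt (verit) field_sum_of_halves)
        have r2b: "0 < r2" unfolding r2_def using m1 by (smt (verit) field_sum_of_halves)
        have r2c: "a - r2 < d" unfolding r2_def using m1 by (smt (verit) field_sum_of_halves)
        note r2 = r2a r2b r2c
        have "w r2 \<noteq> 0" using d(2)[rule_format, of "a - r2"] r2 by simp
        from nodal[OF cw w1 r2(2) _ this] r2 ab obtain a2 b2 where ab2: "0 \<le> a2" "a2 < r2" "r2 < b2" "b2 \<le> 1"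
          "a2 = 0 \<or> w a2 = 0" "w b2 = 0" "\<forall>t. a2 < t \<and> t < b2 \<longrightarrow> w t \<noteq> 0" by auto
        have wa: "w a = 0" using ab L by auto
        have "b2 = a"
        proof (rule ccontr)
          assume "b2 \<noteq> a"
          then consider "a < b2" | "b2 < a" by linarith
          then show False
          proof cases
            case 1 then show False using ab2(7)[rule_format, of a] wa r2 ab2 by auto
          next
            case 2
            have "w (a - (a - b2)) \<noteq> 0"
              using d(2)[rule_format, of "a - b2"] 2 r2 ab2 by auto
            then show False using ab2(6) by simp
          qed
        qed
        have ss2: "ss w a2 a" using sign_const[OF cw ab2(1) _ ] ab2(7) ab \<open>b2 = a\<close> unfolding ss_def by auto
        have "- (a * u' a) * m a > 2"
          by (rule LB'[OF lin ab2(1) _ _ ss2 ab2(5) wa]) (use ab r1 r2 ab2 in auto)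
        then show False using g1 by simp
      qed
    qed
  qed
qed

end
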